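(* Let $X,Y$ be spaces and $F\colon\mathcal{K}(X)\to\mathcal{K}(Y)$ a map. Consider the conditions: (1) if $K,L\in\mathcal{K}(X)$ and $K\subset L$, then $F(K)\subset F(L)$; (2) for each $L\in\mathcal{K}(Y)$ there is $K\in\mathcal{K}(X)$ with $L\subset F(K)$; $(2)_c$ for each countable $L\in\mathcal{K}(Y)$ there is $K\in\mathcal{K}(X)$ with $L\subset F(K)$; $(3)_c$ if $U\subset X$ and $V\subset Y$ are non-empty open sets such that for each countable compact $L\subset V$ there is a compact $K\subset U$ with $L\subset F(K)$, then for any open cover $\mathcal{W}$ of $U$ and any $y\in V$ there exist a finite $\mathcal{E}\subset\mathcal{W}$ and a neighborhood $V_y$ of $y$ such that every countable compact $L\subset V_y$ satisfies $L\subset F(K)$ for some compact $K\subset\bigcup\mathcal{E}$. Then: (a) if $F$ satisfies (1) and (2), $X$ is Lindelöf and $Y$ is a $\mu$-complete $q$-space, then $F$ is monotone set tri-quotient; (b) if $X$ is separable metrizable and $Y$ is first countable, then $F$ satisfies $(3)_c$; moreover, in this case, if $F$ also satisfies (1) and $(2)_c$, then $F$ is monotone set tri-quotient.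
   Context: All spaces are completely regular. $\mathcal{K}(X)$ is the set of compact subsets of $X$, $\mathcal{T}(X)$ the topology of $X$. $F\colon\mathcal{K}(X)\to 2^Y$ is monotone if $K\subset L$ implies $F(K)\subset F(L)$; it is set tri-quotient if there is $s\colon\mathcal{T}(X)\to\mathcal{T}(Y)$ with: (str1) $s(U)\subset\bigcup\{F(K):K\in\mathcal{K}(X),K\subset U\}$; (str2) $s(X)=Y$; (str3) $U\subset V\Rightarrow s(U)\subset s(V)$; (str4) if $y\in s(U)$ and $\mathcal{W}$ is a cover of $\bigcup\{K\in F^{-1}(y):K\subset U\}$ by open subsets of $X$, then $y\in s(\bigcup\mathcal{E})$ for some finite $\mathcal{E}\subset\mathcal{W}$, where $F^{-1}(y)=\{K\in\mathcal{K}(X):y\in F(K)\}$. $Y$ is $\mu$-complete ($\mu$-space) if every closed bounded subset is compact, where $A$ is bounded if every continuous real function is bounded on $A$. $Y$ is a $q$-space if each $y\in Y$ has a sequence of neighborhoods $U_n$ such that whenever $y_n\in U_n$ for all $n$, $\{y_n\}$ has a cluster point in $Y$. *)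

theory Defs
  imports "HOL-Analysis.Analysis"
begin

definition tychonoff_space :: "'a topology \<Rightarrow> bool" where
  "tychonoff_space X \<longleftrightarrow> completely_regular_space X \<and> Hausdorff_space X"

definition nbhd_of :: "'a topology \<Rightarrow> 'a set \<Rightarrow> 'a \<Rightarrow> bool" where
  "nbhd_of Y N y \<longleftrightarrow> N \<subseteq> topspace Y \<and> (\<exists>V. openin Y V \<and> y \<in> V \<and> V \<subseteq> N)"

definition bounded_in :: "'a topology \<Rightarrow> 'a set \<Rightarrow> bool" where
  "bounded_in Y A \<longleftrightarrow> A \<subseteq> topspace Y \<and>
     (\<forall>f. continuous_map Y euclideanreal f \<longrightarrow> bounded (f ` A))"

definition mu_complete :: "'a topology \<Rightarrow> bool" where
  "mu_complete Y \<longleftrightarrow> (\<forall>A. closedin Y A \<and> bounded_in Y A \<longrightarrow> compactin Y A)"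

definition seq_cluster_point :: "'a topology \<Rightarrow> (nat \<Rightarrow> 'a) \<Rightarrow> 'a \<Rightarrow> bool" where
  "seq_cluster_point Y ys z \<longleftrightarrow> z \<in> topspace Y \<and>
     (\<forall>V. openin Y V \<and> z \<in> V \<longrightarrow> (\<forall>N. \<exists>n\<ge>N. ys n \<in> V))"

definition q_space :: "'a topology \<Rightarrow> bool" where
  "q_space Y \<longleftrightarrow> (\<forall>y\<in>topspace Y. \<exists>U :: nat \<Rightarrow> 'a set.
      (\<forall>n. nbhd_of Y (U n) y) \<and>
      (\<forall>ys. (\<forall>n. ys n \<in> U n) \<longrightarrow> (\<exists>z. seq_cluster_point Y ys z)))"

definition maps_compacts :: "'a topology \<Rightarrow> 'b topology \<Rightarrow> ('a set \<Rightarrow> 'b set) \<Rightarrow> bool" where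
  "maps_compacts X Y F \<longleftrightarrow> (\<forall>K. compactin X K \<longrightarrow> compactin Y (F K))"

definition monotone_K :: "'a topology \<Rightarrow> ('a set \<Rightarrow> 'b set) \<Rightarrow> bool" where
  "monotone_K X F \<longleftrightarrow> (\<forall>K L. compactin X K \<and> compactin X L \<and> K \<subseteq> L \<longrightarrow> F K \<subseteq> F L)"

definition set_tri_quotient :: "'a topology \<Rightarrow> 'b topology \<Rightarrow> ('a set \<Rightarrow> 'b set) \<Rightarrow> bool" where
  "set_tri_quotient X Y F \<longleftrightarrow> (\<exists>s :: 'a set \<Rightarrow> 'b set.
     (\<forall>U. openin X U \<longrightarrow> openin Y (s U)) \<and>
     (\<forall>U. openin X U \<longrightarrow> s U \<subseteq> \<Union>{F K | K. compactin X K \<and> K \<subseteq> U}) \<and>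
     s (topspace X) = topspace Y \<and>
     (\<forall>U V. openin X U \<and> openin X V \<and> U \<subseteq> V \<longrightarrow> s U \<subseteq> s V) \<and>
     (\<forall>U y \<W>. openin X U \<and> y \<in> s U \<and> (\<forall>W\<in>\<W>. openin X W) \<and>
         \<Union>{K. compactin X K \<and> y \<in> F K \<and> K \<subseteq> U} \<subseteq> \<Union>\<W> \<longrightarrow>
         (\<exists>\<E>. finite \<E> \<and> \<E> \<subseteq> \<W> \<and> y \<in> s (\<Union>\<E>))))"

definition cond2 :: "'a topology \<Rightarrow> 'b topology \<Rightarrow> ('a set \<Rightarrow> 'b set) \<Rightarrow> bool" where
  "cond2 X Y F \<longleftrightarrow> (\<forall>L. compactin Y L \<longrightarrow> (\<exists>K. compactin X K \<and> L \<subseteq> F K))"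

definition cond2c :: "'a topology \<Rightarrow> 'b topology \<Rightarrow> ('a set \<Rightarrow> 'b set) \<Rightarrow> bool" where
  "cond2c X Y F \<longleftrightarrow> (\<forall>L. compactin Y L \<and> countable L \<longrightarrow> (\<exists>K. compactin X K \<and> L \<subseteq> F K))"

definition cond3c :: "'a topology \<Rightarrow> 'b topology \<Rightarrow> ('a set \<Rightarrow> 'b set) \<Rightarrow> bool" where
  "cond3c X Y F \<longleftrightarrow> (\<forall>U V. openin X U \<and> U \<noteq> {} \<and> openin Y V \<and> V \<noteq> {} \<and>
     (\<forall>L. compactin Y L \<and> countable L \<and> L \<subseteq> V \<longrightarrow>
          (\<exists>K. compactin X K \<and> K \<subseteq> U \<and> L \<subseteq> F K)) \<longrightarrow>
     (\<forall>\<W> y. (\<forall>W\<in>\<W>. openin X W) \<and> U \<subseteq> \<Union>\<W> \<and> y \<in> V \<longrightarrow>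
        (\<exists>\<E> Vy. finite \<E> \<and> \<E> \<subseteq> \<W> \<and> nbhd_of Y Vy y \<and>
           (\<forall>L. compactin Y L \<and> countable L \<and> L \<subseteq> Vy \<longrightarrow>
              (\<exists>K. compactin X K \<and> K \<subseteq> \<Union>\<E> \<and> L \<subseteq> F K)))))"

end

theory Submission
  imports Defs
begin



lemma sep_metr_second_countable:
  assumes "separable_space X" "metrizable_space X" shows "second_countable X"
proof -
  obtain M d where md: "Metric_space M d" and X: "X = Metric_space.mtopology M d"
    using assms(2) metrizable_space_def by blast
  interpret Metric_space M d by (rule md)
  obtain C where C: "countable C" "C \<subseteq> M" "mtopology closure_of C = M"
    using assms(1) unfolding separable_space_def X by auto
  define B where "B = (\<lambda>(c,n). mball c (1 / Suc n)) ` (C \<times> (UNIV::nat set))"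
  have "countable B" by (simp add: B_def C(1))
  moreover have "\<forall>V\<in>B. openin mtopology V" by (auto simp: B_def)
  moreover have "\<exists>V\<in>B. x \<in> V \<and> V \<subseteq> U" if oU: "openin mtopology U" and xU: "x \<in> U" for U x
  proof -
    obtain r where r: "r>0" "mball x r \<subseteq> U" using oU xU unfolding openin_mtopology by meson
    obtain n::nat where n0: "inverse (real (Suc n)) < r/2"
      using reals_Archimedean[of "r/2"] r(1) by auto
    then have n: "1 / Suc n < r/2" by (simp add: inverse_eq_divide)
    have xM: "x \<in> M" using oU xU unfolding openin_mtopology by blast
    have "\<forall>r>0. \<exists>y \<in> C. y \<in> mball x r" using xM C(3) metric_closure_of by auto
    moreover have "(1::real) / Suc n > 0" by simp
    ultimately obtain c where c: "c \<in> C" "c \<in> mball x (1/Suc n)" by blast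
    have "mball c (1 / Suc n) \<in> B" unfolding B_def using c(1) by (rule_tac x="(c,n)" in image_eqI) auto
    moreover have "x \<in> mball c (1 / Suc n)" using c xM commute unfolding mball_def by simp
    moreover have "mball c (1 / Suc n) \<subseteq> mball x r"
    proof
      fix z assume z: "z \<in> mball c (1 / Suc n)"
      have zM: "z \<in> M" "c \<in> M" "d c z < 1 / Suc n" "d x c < 1 / Suc n" using z c unfolding mball_def by auto
      have "d x z \<le> d x c + d c z" using zM xM triangle by blast
      also have "\<dots> < r" using zM n by linarith
      finally show "z \<in> mball x r" using zM xM unfolding mball_def by simp
    qed
    ultimately show ?thesis using r by blast
  qed
  ultimately show ?thesis unfolding second_countable_def X by blast
qed

lemma second_countable_subcover:
  assumes "second_countable X" "\<forall>W\<in>\<W>. openin X W" "U \<subseteq> \<Union>\<W>"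
  shows "\<exists>\<V>. countable \<V> \<and> \<V> \<subseteq> \<W> \<and> U \<subseteq> \<Union>\<V>"
proof -
  have "Lindelof_space (subtopology X U)"
    by (intro second_countable_imp_Lindelof_space second_countable_subtopology assms(1))
  then have L: "\<forall>\<U>. (\<forall>U \<in> \<U>. openin X U) \<and> topspace X \<inter> U \<subseteq> \<Union>\<U>
            \<longrightarrow> (\<exists>V. countable V \<and> V \<subseteq> \<U> \<and> topspace X \<inter> U \<subseteq> \<Union>V)"
    by (simp only: Lindelof_space_subtopology)
  have "topspace X \<inter> U \<subseteq> \<Union>\<W>" using assms(3) by blast
  then obtain \<V> where V: "countable \<V>" "\<V> \<subseteq> \<W>" "topspace X \<inter> U \<subseteq> \<Union>\<V>"
    using assms(2) L by meson
  have "U \<subseteq> topspace X" using assms(2,3) openin_subset by blast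
  then show ?thesis using V by blast
qed

lemma compact_seq_union:
  fixes L T :: "nat \<Rightarrow> 'a set"
  assumes yY: "y \<in> topspace Y" and cL: "\<And>n. compactin Y (L n)" and LT: "\<And>n. L n \<subseteq> T n"
    and conv: "\<And>G. openin Y G \<Longrightarrow> y \<in> G \<Longrightarrow> \<exists>N. \<forall>n\<ge>N. T n \<subseteq> G"
  shows "compactin Y (insert y (\<Union>(range L)))"
  unfolding compactin_def
proof (intro conjI allI impI)
  show "insert y (\<Union>(range L)) \<subseteq> topspace Y"
    using yY cL compactin_subset_topspace by blast
next
  fix \<U> assume U: "(\<forall>U\<in>\<U>. openin Y U) \<and> insert y (\<Union>(range L)) \<subseteq> \<Union>\<U>"
  then obtain G where G: "G \<in> \<U>" "y \<in> G" by blast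
  then have "openin Y G" using U by blast
  then obtain N where N: "\<forall>n\<ge>N. T n \<subseteq> G" using conv G(2) by blast
  have "compactin Y (\<Union>(L ` {..<N}))"
    by (intro compactin_Union) (auto intro: cL)
  moreover have "\<Union>(L ` {..<N}) \<subseteq> \<Union>\<U>" using U by blast
  ultimately obtain \<F> where F: "finite \<F>" "\<F> \<subseteq> \<U>" "\<Union>(L ` {..<N}) \<subseteq> \<Union>\<F>"
    using U unfolding compactin_def by meson
  have "insert y (\<Union>(range L)) \<subseteq> \<Union>(insert G \<F>)"
  proof
    fix z assume "z \<in> insert y (\<Union>(range L))"
    then consider "z = y" | n where "z \<in> L n" by blast
    then show "z \<in> \<Union>(insert G \<F>)"
    proof cases
      case 1 then show ?thesis using G by blast
    next
      case (2 n)
      show ?thesis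
      proof (cases "n < N")
        case True then show ?thesis using 2 F(3) by blast
      next
        case False then have "N \<le> n" by simp
        then have "T n \<subseteq> G" using N by blast
        then have "L n \<subseteq> G" using LT[of n] by blast
        then show ?thesis using 2 by blast
      qed
    qed
  qed
  then show "\<exists>\<F>. finite \<F> \<and> \<F> \<subseteq> \<U> \<and> insert y (\<Union>(range L)) \<subseteq> \<Union>\<F>"
    using F G by (intro exI[of _ "insert G \<F>"]) auto
qed


lemma first_countable_seq:
  assumes fc: "first_countable Y" and oV: "openin Y V" and yV: "y \<in> V"
  shows "\<exists>T :: nat \<Rightarrow> 'a set. (\<forall>n. openin Y (T n) \<and> y \<in> T n \<and> T n \<subseteq> V) \<and> (\<forall>m n. m \<le> n \<longrightarrow> T n \<subseteq> T m) \<and>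
             (\<forall>G. openin Y G \<and> y \<in> G \<longrightarrow> (\<exists>N. \<forall>n\<ge>N. T n \<subseteq> G))"
proof -
  have yY: "y \<in> topspace Y" using oV yV openin_subset by blast
  obtain \<B> where B: "countable \<B>" "\<forall>V\<in>\<B>. openin Y V"
     "\<forall>U. openin Y U \<and> y \<in> U \<longrightarrow> (\<exists>V\<in>\<B>. y \<in> V \<and> V \<subseteq> U)"
  proof -
    have "\<exists>\<B>. countable \<B> \<and> (\<forall>V \<in> \<B>. openin Y V) \<and>
             (\<forall>U. openin Y U \<and> y \<in> U \<longrightarrow> (\<exists>V \<in> \<B>. y \<in> V \<and> V \<subseteq> U))"
      using bspec[OF fc[unfolded first_countable_def] yY] .
    then show ?thesis using that by (elim exE conjE)
  qed
  define B' where "B' = {B\<in>\<B>. y \<in> B}"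
  have cB': "countable B'" using B(1) by (simp add: B'_def)
  have "\<exists>V\<in>\<B>. y \<in> V \<and> V \<subseteq> topspace Y" using B(3) yY openin_topspace by simp
  then obtain V0 where "V0 \<in> \<B>" "y \<in> V0" by blast
  then have "B' \<noteq> {}" unfolding B'_def by blast
  define b where "b = from_nat_into B'"
  have rb: "range b = B'" unfolding b_def using cB' \<open>B' \<noteq> {}\<close> by simp
  have bi: "openin Y (b i) \<and> y \<in> b i" for i
  proof -
    have "b i \<in> B'" using rb by (metis rangeI)
    then show ?thesis using B(2) unfolding B'_def by blast
  qed
  define T where "T n = V \<inter> \<Inter>(b ` {..n})" for n
  have P1: "openin Y (T n)" for n
    unfolding T_def using oV bi by (intro openin_Int openin_Inter) auto
  have P2: "y \<in> T n" "T n \<subseteq> V" for n using bi yV unfolding T_def by auto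
  have P3: "T n \<subseteq> T m" if "m \<le> n" for m n
  proof -
    have "b ` {..m} \<subseteq> b ` {..n}" using that by (intro image_mono) auto
    then show ?thesis unfolding T_def by (intro Int_mono order_refl Inter_anti_mono)
  qed
  have P4: "\<exists>N. \<forall>n\<ge>N. T n \<subseteq> G" if oG: "openin Y G" and yG: "y \<in> G" for G
  proof -
    obtain B0 where "B0 \<in> \<B>" "y \<in> B0" "B0 \<subseteq> G" using B(3) oG yG by blast
    then have "B0 \<in> range b" using rb unfolding B'_def by blast
    then obtain i where "b i = B0" by blast
    have "T n \<subseteq> G" if "n \<ge> i" for n
    proof -
      have "b i \<in> b ` {..n}" using that by simp
      then have "T n \<subseteq> b i" unfolding T_def by (intro Int_lower2[THEN subset_trans] Inter_lower)
      then show ?thesis using \<open>b i = B0\<close> \<open>B0 \<subseteq> G\<close> by simp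
    qed
    then have "\<forall>n\<ge>i. T n \<subseteq> G" by blast
    then show ?thesis by blast
  qed
  have Q1: "\<forall>n. openin Y (T n) \<and> y \<in> T n \<and> T n \<subseteq> V" using P1 P2 by blast
  have Q2: "\<forall>m n. m \<le> n \<longrightarrow> T n \<subseteq> T m" using P3 by blast
  have Q3: "\<forall>G. openin Y G \<and> y \<in> G \<longrightarrow> (\<exists>N. \<forall>n\<ge>N. T n \<subseteq> G)" using P4 by blast
  show ?thesis using Q1 Q2 Q3 by blast
qed



lemma reg_nbhd:
  assumes "regular_space X" "openin X W" "x \<in> W"
  shows "\<exists>G. openin X G \<and> x \<in> G \<and> X closure_of G \<subseteq> W"
proof -
  have "closedin X (topspace X - W)" using assms(2) by blast
  moreover have "x \<in> topspace X - (topspace X - W)" using assms(2,3) openin_subset by blast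
  ultimately obtain G where G: "openin X G" "x \<in> G" "disjnt (topspace X - W) (X closure_of G)"
    using assms(1) unfolding regular_space by meson
  have "X closure_of G \<subseteq> topspace X" by (rule closure_of_subset_topspace)
  then have "X closure_of G \<subseteq> W" using G(3) unfolding disjnt_def by blast
  then show ?thesis using G by blast
qed

lemma bounded_seq:
  fixes Ls Uq :: "nat \<Rightarrow> 'a set" and f :: "'a \<Rightarrow> real"
  assumes Q: "\<And>ys. (\<forall>n. ys n \<in> Uq n) \<Longrightarrow> \<exists>z. seq_cluster_point Y ys z"
    and cL: "\<And>n. compactin Y (Ls n)" and LU: "\<And>n k. k \<le> n \<Longrightarrow> Ls n \<subseteq> Uq k"
    and f: "continuous_map Y euclideanreal f"
  shows "bounded (f ` \<Union>(range Ls))"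
proof (rule ccontr)
  assume nb: "\<not> bounded (f ` \<Union>(range Ls))"
  have ex: "\<exists>a. a \<in> Uq k \<and> real k < \<bar>f a\<bar>" for k
  proof -
    have "compactin Y (\<Union>(Ls ` {..<k}))" by (intro compactin_Union) (auto intro: cL)
    then have "compactin euclideanreal (f ` \<Union>(Ls ` {..<k}))" by (rule image_compactin[OF _ f])
    then have "bounded (f ` \<Union>(Ls ` {..<k}))" by (simp add: compact_imp_bounded)
    then obtain B where B: "\<forall>x\<in>f ` \<Union>(Ls ` {..<k}). norm x \<le> B" unfolding bounded_iff by (elim exE)
    have "\<not> (\<forall>x\<in>f ` \<Union>(range Ls). norm x \<le> max B (real k))" using nb unfolding bounded_iff by blast
    then obtain a where a: "a \<in> \<Union>(range Ls)" "\<not> norm (f a) \<le> max B (real k)" by blast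
    then obtain n where n: "a \<in> Ls n" by blast
    have "\<not> n < k"
    proof
      assume "n < k"
      then have "f a \<in> f ` \<Union>(Ls ` {..<k})" using n by blast
      then have "norm (f a) \<le> B" using B by blast
      then show False using a(2) by simp
    qed
    then have "a \<in> Uq k" using LU[of k n] n by auto
    moreover have "real k < \<bar>f a\<bar>" using a(2) by simp
    ultimately show ?thesis by blast
  qed
  have "\<forall>k. \<exists>a. a \<in> Uq k \<and> real k < \<bar>f a\<bar>" using ex by blast
  from choice[OF this] obtain ys where ys: "\<forall>k. ys k \<in> Uq k \<and> real k < \<bar>f (ys k)\<bar>" ..
  have "\<forall>n. ys n \<in> Uq n" using ys by blast
  then obtain z where z: "seq_cluster_point Y ys z" using Q by blast
  have zY: "z \<in> topspace Y" and zc: "\<forall>V. openin Y V \<and> z \<in> V \<longrightarrow> (\<forall>N. \<exists>n\<ge>N. ys n \<in> V)"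
    using z unfolding seq_cluster_point_def by auto
  define G where "G = {x \<in> topspace Y. f x \<in> ball (f z) 1}"
  have oG: "openin Y G" unfolding G_def by (rule openin_continuous_map_preimage[OF f]) simp
  have zG: "z \<in> G" using zY unfolding G_def by simp
  define N where "N = nat \<lceil>\<bar>f z\<bar> + 1\<rceil>"
  obtain n where n: "n \<ge> N" "ys n \<in> G" using zc oG zG by blast
  have "dist (f z) (f (ys n)) < 1" using n(2) unfolding G_def by simp
  then have i1: "\<bar>f (ys n)\<bar> < \<bar>f z\<bar> + 1" by (simp add: dist_real_def)
  have i2: "\<bar>f z\<bar> + 1 \<le> real N" unfolding N_def by linarith
  have i3: "real N \<le> real n" using n(1) by simp
  have i4: "real n < \<bar>f (ys n)\<bar>" using ys by blast
  show False using i1 i2 i3 i4 by linarith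
qed



lemma main_contra:
  fixes X :: "'a topology" and Y :: "'b topology" and F :: "'a set \<Rightarrow> 'b set"
  assumes regX: "regular_space X" and regY: "regular_space Y"
    and LX: "Lindelof_space X" and mu: "mu_complete Y" and q: "q_space Y"
    and oV: "openin Y V" and yV: "y \<in> V"
    and clC: "closedin X C" and CW: "C \<subseteq> \<Union>\<W>" and oW: "\<forall>W\<in>\<W>. openin X W" and Wne: "\<W> \<noteq> {}"
    and PC: "\<And>L. compactin Y L \<Longrightarrow> L \<subseteq> V \<Longrightarrow> \<exists>K. compactin X K \<and> K \<subseteq> C \<and> L \<subseteq> F K"
  shows "\<exists>\<E> T C'. finite \<E> \<and> \<E> \<subseteq> \<W> \<and> openin Y T \<and> y \<in> T \<and> closedin X C' \<and> C' \<subseteq> \<Union>\<E> \<and>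
           (\<forall>L. compactin Y L \<and> L \<subseteq> T \<longrightarrow> (\<exists>K. compactin X K \<and> K \<subseteq> C' \<and> L \<subseteq> F K))"
proof -
  have yY: "y \<in> topspace Y" using oV yV openin_subset by blast
  define Ocv where "Ocv = {G. openin X G \<and> (\<exists>W\<in>\<W>. X closure_of G \<subseteq> W)}"
  have CO: "C \<subseteq> \<Union>Ocv"
  proof
    fix x assume xC: "x \<in> C"
    then obtain W where W: "W \<in> \<W>" "x \<in> W" using CW by blast
    have oW1: "openin X W" using oW W(1) by blast
    obtain G where G: "openin X G" "x \<in> G" "X closure_of G \<subseteq> W"
      using reg_nbhd[OF regX oW1 W(2)] by (elim exE conjE)
    have "G \<in> Ocv" unfolding Ocv_def using G W(1) by blast
    then show "x \<in> \<Union>Ocv" using G(2) by blast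
  qed
  have LC: "Lindelof_space (subtopology X C)" by (rule Lindelof_space_closedin_subtopology[OF LX clC])
  have Lsub: "\<forall>\<U>. (\<forall>U \<in> \<U>. openin X U) \<and> C \<subseteq> \<Union>\<U> \<longrightarrow> (\<exists>V. countable V \<and> V \<subseteq> \<U> \<and> C \<subseteq> \<Union>V)"
    by (rule Lindelof_space_subtopology_subset[OF closedin_subset[OF clC], THEN iffD1, OF LC])
  have "\<forall>U \<in> Ocv. openin X U" unfolding Ocv_def by simp
  then have "\<exists>V. countable V \<and> V \<subseteq> Ocv \<and> C \<subseteq> \<Union>V" using Lsub[rule_format, OF conjI[OF _ CO]] by blast
  then obtain Ocv0 where O0: "countable Ocv0" "Ocv0 \<subseteq> Ocv" "C \<subseteq> \<Union>Ocv0" by (elim exE conjE)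
  define Ocv1 where "Ocv1 = insert {} Ocv0"
  have "{} \<in> Ocv" unfolding Ocv_def using Wne by auto
  then have O1: "countable Ocv1" "Ocv1 \<subseteq> Ocv" "C \<subseteq> \<Union>Ocv1" "Ocv1 \<noteq> {}" using O0 unfolding Ocv1_def by auto
  define ob where "ob = from_nat_into Ocv1"
  have ro: "range ob = Ocv1" unfolding ob_def using O1 by simp
  have oO: "ob i \<in> Ocv" for i
  proof -
    have "ob i \<in> Ocv1" using ro by (metis rangeI)
    then show ?thesis using O1(2) by (rule subsetD[rotated])
  qed
  have exW: "\<exists>W. W \<in> \<W> \<and> X closure_of (ob i) \<subseteq> W" for i using oO[of i] unfolding Ocv_def by auto
  from choice[OF allI[OF exW]] obtain wf where wf: "\<forall>i. wf i \<in> \<W> \<and> X closure_of (ob i) \<subseteq> wf i" ..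
  define E where "E n = wf ` {..n}" for n
  define Cn where "Cn n = C \<inter> \<Union>((\<lambda>i. X closure_of (ob i)) ` {..n})" for n
  have finE: "finite (E n)" for n unfolding E_def by simp
  have EW: "E n \<subseteq> \<W>" for n unfolding E_def using wf by blast
  have clCn: "closedin X (Cn n)" for n unfolding Cn_def
    by (intro closedin_Int clC closedin_Union) auto
  have CnE: "Cn n \<subseteq> \<Union>(E n)" for n unfolding Cn_def E_def using wf by blast
  show ?thesis
  proof (rule ccontr)
    assume neg: "\<not> ?thesis"
    have nn: "\<not> (\<forall>L. compactin Y L \<and> L \<subseteq> T \<longrightarrow> (\<exists>K. compactin X K \<and> K \<subseteq> Cn n \<and> L \<subseteq> F K))"
      if oT: "openin Y T" and yT: "y \<in> T" for n T
    proof
      assume a: "\<forall>L. compactin Y L \<and> L \<subseteq> T \<longrightarrow> (\<exists>K. compactin X K \<and> K \<subseteq> Cn n \<and> L \<subseteq> F K)"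
      have "\<exists>\<E> T C'. finite \<E> \<and> \<E> \<subseteq> \<W> \<and> openin Y T \<and> y \<in> T \<and> closedin X C' \<and> C' \<subseteq> \<Union>\<E> \<and>
           (\<forall>L. compactin Y L \<and> L \<subseteq> T \<longrightarrow> (\<exists>K. compactin X K \<and> K \<subseteq> C' \<and> L \<subseteq> F K))"
        using finE[of n] EW[of n] oT yT clCn[of n] CnE[of n] a
        by (intro exI[of _ "E n"] exI[of _ T] exI[of _ "Cn n"] conjI)
      then show False using neg by blast
    qed
    have "\<exists>U :: nat \<Rightarrow> 'b set. (\<forall>n. nbhd_of Y (U n) y) \<and>
      (\<forall>ys. (\<forall>n. ys n \<in> U n) \<longrightarrow> (\<exists>z. seq_cluster_point Y ys z))"
      using q yY unfolding q_space_def by blast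
    then obtain Uq :: "nat \<Rightarrow> 'b set" where Uq1: "\<forall>n. nbhd_of Y (Uq n) y"
      and Uq2: "\<forall>ys. (\<forall>n. ys n \<in> Uq n) \<longrightarrow> (\<exists>z. seq_cluster_point Y ys z)" by (elim exE conjE)
    have "\<exists>G. openin Y G \<and> y \<in> G \<and> G \<subseteq> Uq n" for n
      using Uq1 unfolding nbhd_of_def by blast
    then have "\<forall>n. \<exists>G. openin Y G \<and> y \<in> G \<and> G \<subseteq> Uq n" by blast
    from choice[OF this] obtain Gq where Gq: "\<forall>n. openin Y (Gq n) \<and> y \<in> Gq n \<and> Gq n \<subseteq> Uq n" ..
    obtain G0 where G0: "openin Y G0" "y \<in> G0" "Y closure_of G0 \<subseteq> V"
      using reg_nbhd[OF regY oV yV] by (elim exE conjE)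
    define T where "T n = G0 \<inter> \<Inter>(Gq ` {..n})" for n
    have oT: "openin Y (T n)" for n
      unfolding T_def using G0 Gq by (intro openin_Int openin_Inter) auto
    have yT: "y \<in> T n" for n unfolding T_def using G0 Gq by auto
    have TG0: "T n \<subseteq> G0" for n unfolding T_def by blast
    have TU: "T n \<subseteq> Uq k" if "k \<le> n" for n k
    proof -
      have "Gq k \<in> Gq ` {..n}" using that by simp
      then have "T n \<subseteq> Gq k" unfolding T_def by (intro Int_lower2[THEN subset_trans] Inter_lower)
      then show ?thesis using Gq by blast
    qed
    have ex: "\<exists>L. compactin Y L \<and> L \<subseteq> T n \<and> \<not> (\<exists>K. compactin X K \<and> K \<subseteq> Cn n \<and> L \<subseteq> F K)" for n
      using nn[OF oT yT, of n] by (simp only: not_all not_imp conj_assoc)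
    from choice[OF allI[OF ex]] obtain Ls where Ls0: "\<forall>n. compactin Y (Ls n) \<and> Ls n \<subseteq> T n \<and>
        \<not> (\<exists>K. compactin X K \<and> K \<subseteq> Cn n \<and> Ls n \<subseteq> F K)" ..
    have cLs: "compactin Y (Ls n)" for n using Ls0 by blast
    have LsT: "Ls n \<subseteq> T n" for n using Ls0 by blast
    have badLs: "\<not> (\<exists>K. compactin X K \<and> K \<subseteq> Cn n \<and> Ls n \<subseteq> F K)" for n using Ls0 by blast
    define A where "A = \<Union>(range Ls)"
    have AY: "A \<subseteq> topspace Y" unfolding A_def using cLs compactin_subset_topspace by blast
    have bA: "bounded (f ` A)" if f: "continuous_map Y euclideanreal f" for f
      unfolding A_def
    proof (rule bounded_seq[where Uq=Uq and Y=Y])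
      show "\<exists>z. seq_cluster_point Y ys z" if "\<forall>n. ys n \<in> Uq n" for ys using Uq2 that by blast
      show "compactin Y (Ls n)" for n by (rule cLs)
      show "Ls n \<subseteq> Uq k" if "k \<le> n" for n k using LsT[of n] TU[OF that] by blast
      show "continuous_map Y euclideanreal f" by (rule f)
    qed
    define cA where "cA = Y closure_of A"
    have bcA: "bounded_in Y cA" unfolding bounded_in_def
    proof (intro conjI allI impI)
      show "cA \<subseteq> topspace Y" unfolding cA_def by (rule closure_of_subset_topspace)
      fix f :: "'b \<Rightarrow> real" assume f: "continuous_map Y euclideanreal f"
      have "f ` cA \<subseteq> euclideanreal closure_of (f ` A)" unfolding cA_def
        by (rule continuous_map_image_closure_subset[OF f])
      then have "f ` cA \<subseteq> closure (f ` A)" by simp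
      moreover have "bounded (closure (f ` A))" using bA[OF f] by (rule bounded_closure)
      ultimately show "bounded (f ` cA)" by (rule bounded_subset[rotated])
    qed
    have ccA: "compactin Y cA" using mu bcA unfolding mu_complete_def cA_def by simp
    have cAV: "cA \<subseteq> V"
    proof -
      have "A \<subseteq> G0" unfolding A_def using LsT TG0 by blast
      then have "cA \<subseteq> Y closure_of G0" unfolding cA_def by (rule closure_of_mono)
      then show ?thesis using G0(3) by blast
    qed
    obtain K where K: "compactin X K" "K \<subseteq> C" "cA \<subseteq> F K"
      using PC[OF ccA cAV] by (elim exE conjE)
    have "C \<subseteq> \<Union>(range ob)" using O1(3) ro by simp
    then have Ko: "K \<subseteq> \<Union>(range ob)" using K(2) by (rule subset_trans[rotated])
    have "\<forall>G\<in>range ob. openin X G"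
    proof
      fix G assume "G \<in> range ob"
      then obtain i where "G = ob i" by blast
      then show "openin X G" using oO[of i] unfolding Ocv_def by simp
    qed
    then have "\<exists>\<G>. finite \<G> \<and> \<G> \<subseteq> range ob \<and> K \<subseteq> \<Union>\<G>"
      using conjunct2[OF K(1)[unfolded compactin_def], rule_format, OF conjI[OF _ Ko]] by blast
    then obtain \<G> where G: "finite \<G>" "\<G> \<subseteq> range ob" "K \<subseteq> \<Union>\<G>" by (elim exE conjE)
    then obtain I where I: "finite I" "\<G> = ob ` I" by (meson finite_subset_image)
    define m where "m = Max (insert 0 I)"
    have "I \<subseteq> {..m}"
    proof
      fix i assume "i \<in> I"
      then have "i \<le> m" unfolding m_def using I(1) by (intro Max_ge) auto
      then show "i \<in> {..m}" by simp
    qed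
    then have "ob ` I \<subseteq> ob ` {..m}" by (rule image_mono)
    then have G2: "\<G> \<subseteq> ob ` {..m}" unfolding I(2) .
    have K1: "K \<subseteq> \<Union>(ob ` {..m})" by (rule subset_trans[OF G(3) Union_mono[OF G2]])
    have clsub: "ob i \<subseteq> X closure_of (ob i)" for i
      using oO[of i] unfolding Ocv_def by (simp add: closure_of_subset openin_subset)
    have "\<Union>(ob ` {..m}) \<subseteq> \<Union>((\<lambda>i. X closure_of (ob i)) ` {..m})"
      by (rule UN_mono) (simp_all add: clsub)
    then have "K \<subseteq> \<Union>((\<lambda>i. X closure_of (ob i)) ` {..m})" by (rule subset_trans[OF K1])
    then have KC: "K \<subseteq> Cn m" unfolding Cn_def using K(2) by (intro Int_greatest)
    have "Ls m \<subseteq> A" unfolding A_def by (rule UN_upper) simp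
    also have "A \<subseteq> cA" unfolding cA_def by (rule closure_of_subset[OF AY])
    also have "cA \<subseteq> F K" by (rule K(3))
    finally have LF: "Ls m \<subseteq> F K" .
    have "\<exists>K. compactin X K \<and> K \<subseteq> Cn m \<and> Ls m \<subseteq> F K" using K(1) KC LF by blast
    then show False using badLs[of m] by contradiction
  qed
qed



lemma compactin_insert_pt: "y \<in> topspace Y \<Longrightarrow> compactin Y L \<Longrightarrow> compactin Y (insert y L)"
  using compactin_Un[of Y "{y}" L] by simp

lemma tri_quotient_b:
  assumes c3: "cond3c X Y F" and c2: "cond2c X Y F"
  shows "set_tri_quotient X Y F"
proof -
  define P where "P U V \<longleftrightarrow> (\<forall>L. compactin Y L \<and> countable L \<and> L \<subseteq> V \<longrightarrow> (\<exists>K. compactin X K \<and> K \<subseteq> U \<and> L \<subseteq> F K))" for U V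
  have PD: "\<exists>K. compactin X K \<and> K \<subseteq> U \<and> L \<subseteq> F K"
    if "P U V" "compactin Y L" "countable L" "L \<subseteq> V" for U V L
    using that unfolding P_def by blast
  define s where "s U = \<Union>{V. openin Y V \<and> P U V}" for U
  have memS: "y \<in> s U \<longleftrightarrow> (\<exists>V. openin Y V \<and> P U V \<and> y \<in> V)" for y U
    unfolding s_def by blast
  have S1: "openin Y (s U)" for U unfolding s_def by (rule openin_Union) simp
  have S2: "s U \<subseteq> \<Union>{F K | K. compactin X K \<and> K \<subseteq> U}" for U
  proof
    fix y assume "y \<in> s U"
    then have "\<exists>V. openin Y V \<and> P U V \<and> y \<in> V" using memS[of y U] by simp
    then obtain V where V: "openin Y V" "P U V" "y \<in> V" by (elim exE conjE)
    have yY: "y \<in> topspace Y" using V openin_subset by blast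
    have "compactin Y {y}" "countable {y}" "{y} \<subseteq> V" using yY V by auto
    then have "\<exists>K. compactin X K \<and> K \<subseteq> U \<and> {y} \<subseteq> F K" using PD[OF V(2)] by blast
    then obtain K where "compactin X K" "K \<subseteq> U" "{y} \<subseteq> F K" by (elim exE conjE)
    then show "y \<in> \<Union>{F K | K. compactin X K \<and> K \<subseteq> U}" by blast
  qed
  have S3: "s (topspace X) = topspace Y"
  proof
    show "s (topspace X) \<subseteq> topspace Y" unfolding s_def using openin_subset by blast
    have "P (topspace X) (topspace Y)" unfolding P_def
    proof (intro allI impI)
      fix L assume L: "compactin Y L \<and> countable L \<and> L \<subseteq> topspace Y"
      then have "\<exists>K. compactin X K \<and> L \<subseteq> F K" using c2[unfolded cond2c_def, rule_format, of L] by blast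
      then obtain K where "compactin X K" "L \<subseteq> F K" by (elim exE conjE)
      then show "\<exists>K. compactin X K \<and> K \<subseteq> topspace X \<and> L \<subseteq> F K"
        using compactin_subset_topspace by blast
    qed
    then show "topspace Y \<subseteq> s (topspace X)" unfolding s_def by blast
  qed
  have S4: "s U \<subseteq> s V" if "U \<subseteq> V" for U V
  proof -
    have "P U W \<Longrightarrow> P V W" for W unfolding P_def using that by blast
    then show ?thesis unfolding s_def by blast
  qed
  have S5: "\<exists>\<E>. finite \<E> \<and> \<E> \<subseteq> \<W> \<and> y \<in> s (\<Union>\<E>)"
    if oU: "openin X U" and yU: "y \<in> s U" and oW: "\<forall>W\<in>\<W>. openin X W"
      and cov: "\<Union>{K. compactin X K \<and> y \<in> F K \<and> K \<subseteq> U} \<subseteq> \<Union>\<W>" for U y \<W>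
  proof -
    have "\<exists>V. openin Y V \<and> P U V \<and> y \<in> V" using yU memS[of y U] by simp
    then obtain V where V: "openin Y V" "P U V" "y \<in> V" by (elim exE conjE)
    have yY: "y \<in> topspace Y" using V openin_subset by blast
    define U' where "U' = U \<inter> \<Union>\<W>"
    have PV': "P U' V" unfolding P_def
    proof (intro allI impI)
      fix L assume L: "compactin Y L \<and> countable L \<and> L \<subseteq> V"
      then have Lc: "compactin Y L" and Lct: "countable L" and LV: "L \<subseteq> V" by auto
      have c1: "compactin Y (insert y L)" by (rule compactin_insert_pt[OF yY Lc])
      have c2: "countable (insert y L)" using Lct by simp
      have c3: "insert y L \<subseteq> V" using LV V(3) by simp
      obtain K where K: "compactin X K" "K \<subseteq> U" "insert y L \<subseteq> F K"
        using PD[OF V(2) c1 c2 c3] by (elim exE conjE)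
      have "K \<in> {K. compactin X K \<and> y \<in> F K \<and> K \<subseteq> U}" using K by simp
      then have "K \<subseteq> \<Union>{K. compactin X K \<and> y \<in> F K \<and> K \<subseteq> U}" by (rule Union_upper)
      then have "K \<subseteq> U'" unfolding U'_def using cov K(2) by simp
      then show "\<exists>K. compactin X K \<and> K \<subseteq> U' \<and> L \<subseteq> F K" using K by blast
    qed
    show ?thesis
    proof (cases "U' = {}")
      case True
      have "P {} V" using PV' True by simp
      then have "y \<in> s (\<Union>{})" using memS[of y "{}"] V by auto
      then show ?thesis by (intro exI[of _ "{}"]) simp
    next
      case False
      have oU': "openin X U'" unfolding U'_def using oU oW by blast
      have A: "openin X U' \<and> U' \<noteq> {} \<and> openin Y V \<and> V \<noteq> {} \<and>
         (\<forall>L. compactin Y L \<and> countable L \<and> L \<subseteq> V \<longrightarrow>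
          (\<exists>K. compactin X K \<and> K \<subseteq> U' \<and> L \<subseteq> F K))"
        using oU' False V PV' unfolding P_def by blast
      have B: "(\<forall>W\<in>\<W>. openin X W) \<and> U' \<subseteq> \<Union>\<W> \<and> y \<in> V"
        using oW V(3) unfolding U'_def by blast
      have "\<exists>\<E> Vy. finite \<E> \<and> \<E> \<subseteq> \<W> \<and> nbhd_of Y Vy y \<and>
           (\<forall>L. compactin Y L \<and> countable L \<and> L \<subseteq> Vy \<longrightarrow>
              (\<exists>K. compactin X K \<and> K \<subseteq> \<Union>\<E> \<and> L \<subseteq> F K))"
        using c3[unfolded cond3c_def, rule_format, OF A B] .
      then obtain \<E> Vy where E: "finite \<E>" "\<E> \<subseteq> \<W>" "nbhd_of Y Vy y"
        and PE: "\<forall>L. compactin Y L \<and> countable L \<and> L \<subseteq> Vy \<longrightarrow>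
              (\<exists>K. compactin X K \<and> K \<subseteq> \<Union>\<E> \<and> L \<subseteq> F K)" by (elim exE conjE)
      have "\<exists>G. openin Y G \<and> y \<in> G \<and> G \<subseteq> Vy" using E(3) unfolding nbhd_of_def by (elim conjE)
      then obtain G where G: "openin Y G" "y \<in> G" "G \<subseteq> Vy" by (elim exE conjE)
      have "P (\<Union>\<E>) G" unfolding P_def
      proof (intro allI impI)
        fix L assume "compactin Y L \<and> countable L \<and> L \<subseteq> G"
        then have "compactin Y L \<and> countable L \<and> L \<subseteq> Vy" using G(3) by blast
        then show "\<exists>K. compactin X K \<and> K \<subseteq> \<Union>\<E> \<and> L \<subseteq> F K" using PE by blast
      qed
      then have "y \<in> s (\<Union>\<E>)" using memS[of y "\<Union>\<E>"] G by blast
      then show ?thesis using E by blast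
    qed
  qed
  show ?thesis unfolding set_tri_quotient_def
  proof (rule exI[of _ s], intro conjI)
    show "\<forall>U. openin X U \<longrightarrow> openin Y (s U)" using S1 by simp
    show "\<forall>U. openin X U \<longrightarrow> s U \<subseteq> \<Union>{F K | K. compactin X K \<and> K \<subseteq> U}" using S2 by simp
    show "s (topspace X) = topspace Y" by (rule S3)
    show "\<forall>U V. openin X U \<and> openin X V \<and> U \<subseteq> V \<longrightarrow> s U \<subseteq> s V" using S4 by simp
    show "\<forall>U y \<W>. openin X U \<and> y \<in> s U \<and> (\<forall>W\<in>\<W>. openin X W) \<and>
         \<Union>{K. compactin X K \<and> y \<in> F K \<and> K \<subseteq> U} \<subseteq> \<Union>\<W> \<longrightarrow>
         (\<exists>\<E>. finite \<E> \<and> \<E> \<subseteq> \<W> \<and> y \<in> s (\<Union>\<E>))"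
    proof (intro allI impI)
      fix U y \<W>
      assume h: "openin X U \<and> y \<in> s U \<and> (\<forall>W\<in>\<W>. openin X W) \<and>
         \<Union>{K. compactin X K \<and> y \<in> F K \<and> K \<subseteq> U} \<subseteq> \<Union>\<W>"
      show "\<exists>\<E>. finite \<E> \<and> \<E> \<subseteq> \<W> \<and> y \<in> s (\<Union>\<E>)"
        using h by (elim conjE) (rule S5)
    qed
  qed
qed



lemma cond3c_lemma:
  assumes sc: "second_countable X" and fc: "first_countable Y"
  shows "cond3c X Y F"
  unfolding cond3c_def
proof (intro allI impI)
  fix U V \<W> y
  assume H: "openin X U \<and> U \<noteq> {} \<and> openin Y V \<and> V \<noteq> {} \<and>
     (\<forall>L. compactin Y L \<and> countable L \<and> L \<subseteq> V \<longrightarrow>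
          (\<exists>K. compactin X K \<and> K \<subseteq> U \<and> L \<subseteq> F K))"
  assume H2: "(\<forall>W\<in>\<W>. openin X W) \<and> U \<subseteq> \<Union>\<W> \<and> y \<in> V"
  have oV: "openin Y V" and Une: "U \<noteq> {}" and yV: "y \<in> V" and oW: "\<forall>W\<in>\<W>. openin X W"
    and UW: "U \<subseteq> \<Union>\<W>" using H H2 by auto
  have HL: "\<And>L. compactin Y L \<Longrightarrow> countable L \<Longrightarrow> L \<subseteq> V \<Longrightarrow> \<exists>K. compactin X K \<and> K \<subseteq> U \<and> L \<subseteq> F K"
    using H by blast
  obtain \<W>0 where W0: "countable \<W>0" "\<W>0 \<subseteq> \<W>" "U \<subseteq> \<Union>\<W>0"
    using second_countable_subcover[OF sc oW UW] by blast
  have "\<W>0 \<noteq> {}" using W0(3) Une by blast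
  define w where "w = from_nat_into \<W>0"
  have rw: "range w = \<W>0" unfolding w_def using W0(1) \<open>\<W>0 \<noteq> {}\<close> by simp
  define E where "E n = w ` {..n}" for n
  have finE: "finite (E n)" for n unfolding E_def by simp
  have EW: "E n \<subseteq> \<W>" for n unfolding E_def using rw W0(2) by blast
  have yY: "y \<in> topspace Y" using oV yV openin_subset by blast
  obtain T :: "nat \<Rightarrow> 'b set" where T1': "\<forall>n. openin Y (T n) \<and> y \<in> T n \<and> T n \<subseteq> V"
    and T2': "\<forall>m n. m \<le> n \<longrightarrow> T n \<subseteq> T m"
    and T3': "\<forall>G. openin Y G \<and> y \<in> G \<longrightarrow> (\<exists>N. \<forall>n\<ge>N. T n \<subseteq> G)"
    using first_countable_seq[OF fc oV yV] by (elim exE conjE)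
  have T1: "\<And>n. openin Y (T n) \<and> y \<in> T n \<and> T n \<subseteq> V" using T1' by blast
  have T3: "\<And>G. openin Y G \<Longrightarrow> y \<in> G \<Longrightarrow> \<exists>N. \<forall>n\<ge>N. T n \<subseteq> G" using T3' by blast
  have nbT: "nbhd_of Y (T n) y" for n unfolding nbhd_of_def using T1[of n] openin_subset by blast
  show "\<exists>\<E> Vy. finite \<E> \<and> \<E> \<subseteq> \<W> \<and> nbhd_of Y Vy y \<and>
           (\<forall>L. compactin Y L \<and> countable L \<and> L \<subseteq> Vy \<longrightarrow>
              (\<exists>K. compactin X K \<and> K \<subseteq> \<Union>\<E> \<and> L \<subseteq> F K))"
  proof (rule ccontr)
    assume neg: "\<not> ?thesis"
    have nn: "\<not>(\<forall>L. compactin Y L \<and> countable L \<and> L \<subseteq> T n \<longrightarrow> (\<exists>K. compactin X K \<and> K \<subseteq> \<Union>(E n) \<and> L \<subseteq> F K))" for n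
    proof
      assume a: "\<forall>L. compactin Y L \<and> countable L \<and> L \<subseteq> T n \<longrightarrow> (\<exists>K. compactin X K \<and> K \<subseteq> \<Union>(E n) \<and> L \<subseteq> F K)"
      have "\<exists>\<E> Vy. finite \<E> \<and> \<E> \<subseteq> \<W> \<and> nbhd_of Y Vy y \<and>
           (\<forall>L. compactin Y L \<and> countable L \<and> L \<subseteq> Vy \<longrightarrow>
              (\<exists>K. compactin X K \<and> K \<subseteq> \<Union>\<E> \<and> L \<subseteq> F K))"
        using a finE[of n] EW[of n] nbT[of n] by (intro exI[of _ "E n"] exI[of _ "T n"] conjI)
      then show False using neg by blast
    qed
    have ex: "\<exists>L. compactin Y L \<and> countable L \<and> L \<subseteq> T n \<and> \<not> (\<exists>K. compactin X K \<and> K \<subseteq> \<Union>(E n) \<and> L \<subseteq> F K)" for n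
      using nn[of n] by (simp only: not_all not_imp conj_assoc)
    from choice[OF allI[OF ex]] obtain Ls where Ls0: "\<forall>n. compactin Y (Ls n) \<and> countable (Ls n) \<and> Ls n \<subseteq> T n \<and>
        \<not> (\<exists>K. compactin X K \<and> K \<subseteq> \<Union>(E n) \<and> Ls n \<subseteq> F K)" ..
    have Ls: "\<And>n. compactin Y (Ls n) \<and> countable (Ls n) \<and> Ls n \<subseteq> T n \<and>
        \<not> (\<exists>K. compactin X K \<and> K \<subseteq> \<Union>(E n) \<and> Ls n \<subseteq> F K)" using Ls0 by blast
    define L where "L = insert y (\<Union>(range Ls))"
    have cL: "compactin Y L" unfolding L_def
      by (rule compact_seq_union[where T=T]) (use yY Ls T3 in auto)
    have ctL: "countable L" unfolding L_def using Ls by auto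
    have LV: "L \<subseteq> V" unfolding L_def using Ls T1 yV by blast
    obtain K where K: "compactin X K" "K \<subseteq> U" "L \<subseteq> F K" using HL[OF cL ctL LV] by blast
    have "K \<subseteq> \<Union>(range w)" using K(2) W0(3) rw by blast
    moreover have "\<forall>W\<in>range w. openin X W" using rw W0(2) oW by blast
    ultimately obtain \<G> where G: "finite \<G>" "\<G> \<subseteq> range w" "K \<subseteq> \<Union>\<G>"
      using K(1) unfolding compactin_def by meson
    then obtain I where I: "finite I" "\<G> = w ` I" by (meson finite_subset_image)
    define n where "n = Max (insert 0 I)"
    have "I \<subseteq> {..n}" unfolding n_def using I(1) by auto
    then have "\<G> \<subseteq> E n" unfolding E_def I(2) by blast
    then have "K \<subseteq> \<Union>(E n)" using G(3) by blast
    moreover have "Ls n \<subseteq> F K" using K(3) unfolding L_def by blast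
    ultimately show False using Ls[of n] K(1) by blast
  qed
qed



lemma tri_quotient_a:
  fixes X :: "'a topology" and Y :: "'b topology" and F :: "'a set \<Rightarrow> 'b set"
  assumes tX: "tychonoff_space X" and tY: "tychonoff_space Y" and mono: "monotone_K X F"
    and c2: "cond2 X Y F" and LX: "Lindelof_space X" and mu: "mu_complete Y" and q: "q_space Y"
  shows "set_tri_quotient X Y F"
proof -
  have regX: "regular_space X" using tX unfolding tychonoff_space_def
    by (intro completely_regular_imp_regular_space) simp
  have regY: "regular_space Y" using tY unfolding tychonoff_space_def
    by (intro completely_regular_imp_regular_space) simp
  define PP where "PP C V \<longleftrightarrow> (\<forall>L. compactin Y L \<and> L \<subseteq> V \<longrightarrow> (\<exists>K. compactin X K \<and> K \<subseteq> C \<and> L \<subseteq> F K))" for C V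
  define P where "P U V \<longleftrightarrow> (\<exists>C. closedin X C \<and> C \<subseteq> U \<and> PP C V)" for U V
  have PPD: "\<exists>K. compactin X K \<and> K \<subseteq> C \<and> L \<subseteq> F K"
    if "PP C V" "compactin Y L" "L \<subseteq> V" for C V L
    using that unfolding PP_def by blast
  define s where "s U = \<Union>{V. openin Y V \<and> P U V}" for U
  have memS: "y \<in> s U \<longleftrightarrow> (\<exists>V. openin Y V \<and> P U V \<and> y \<in> V)" for y U
    unfolding s_def by blast
  have S1: "openin Y (s U)" for U unfolding s_def by (rule openin_Union) simp
  have S2: "s U \<subseteq> \<Union>{F K | K. compactin X K \<and> K \<subseteq> U}" for U
  proof
    fix y assume "y \<in> s U"
    then have "\<exists>V. openin Y V \<and> P U V \<and> y \<in> V" using memS[of y U] by simp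
    then obtain V where V: "openin Y V" "P U V" "y \<in> V" by (elim exE conjE)
    then obtain C where C: "closedin X C" "C \<subseteq> U" "PP C V" unfolding P_def by (elim exE conjE)
    have yY: "y \<in> topspace Y" using V openin_subset by blast
    have "compactin Y {y}" "{y} \<subseteq> V" using yY V by auto
    then have "\<exists>K. compactin X K \<and> K \<subseteq> C \<and> {y} \<subseteq> F K" by (rule PPD[OF C(3)])
    then obtain K where "compactin X K" "K \<subseteq> C" "{y} \<subseteq> F K" by (elim exE conjE)
    then show "y \<in> \<Union>{F K | K. compactin X K \<and> K \<subseteq> U}" using C(2) by blast
  qed
  have S3: "s (topspace X) = topspace Y"
  proof
    show "s (topspace X) \<subseteq> topspace Y" unfolding s_def using openin_subset by blast
    have "PP (topspace X) (topspace Y)" unfolding PP_def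
    proof (intro allI impI)
      fix L assume L: "compactin Y L \<and> L \<subseteq> topspace Y"
      then have "\<exists>K. compactin X K \<and> L \<subseteq> F K" using c2[unfolded cond2_def, rule_format, of L] by blast
      then obtain K where "compactin X K" "L \<subseteq> F K" by (elim exE conjE)
      then show "\<exists>K. compactin X K \<and> K \<subseteq> topspace X \<and> L \<subseteq> F K"
        using compactin_subset_topspace by blast
    qed
    then have "P (topspace X) (topspace Y)" unfolding P_def by blast
    then show "topspace Y \<subseteq> s (topspace X)" unfolding s_def by blast
  qed
  have S4: "s U \<subseteq> s V" if "U \<subseteq> V" for U V
  proof -
    have "P U W \<Longrightarrow> P V W" for W unfolding P_def using that by blast
    then show ?thesis unfolding s_def by blast
  qed
  have S5: "\<exists>\<E>. finite \<E> \<and> \<E> \<subseteq> \<W> \<and> y \<in> s (\<Union>\<E>)"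
    if oU: "openin X U" and yU: "y \<in> s U" and oW: "\<forall>W\<in>\<W>. openin X W"
      and cov: "\<Union>{K. compactin X K \<and> y \<in> F K \<and> K \<subseteq> U} \<subseteq> \<Union>\<W>" for U y \<W>
  proof -
    have "\<exists>V. openin Y V \<and> P U V \<and> y \<in> V" using yU memS[of y U] by simp
    then obtain V where V: "openin Y V" "P U V" "y \<in> V" by (elim exE conjE)
    then obtain C where C: "closedin X C" "C \<subseteq> U" "PP C V" unfolding P_def by (elim exE conjE)
    have yY: "y \<in> topspace Y" using V openin_subset by blast
    have CX: "C \<subseteq> topspace X" using C(1) closedin_subset by blast
    have "compactin Y {y}" "{y} \<subseteq> V" using yY V by auto
    then have "\<exists>K. compactin X K \<and> K \<subseteq> C \<and> {y} \<subseteq> F K" by (rule PPD[OF C(3)])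
    then obtain K0 where K0: "compactin X K0" "K0 \<subseteq> C" "{y} \<subseteq> F K0" by (elim exE conjE)
    have CW: "C \<subseteq> \<Union>\<W>"
    proof
      fix x assume xC: "x \<in> C"
      have cK1: "compactin X (insert x K0)" using compactin_insert_pt[OF _ K0(1)] xC CX by blast
      have "F K0 \<subseteq> F (insert x K0)"
        using mono[unfolded monotone_K_def, rule_format, OF conjI[OF K0(1) conjI[OF cK1]]] by blast
      then have "y \<in> F (insert x K0)" using K0(3) by blast
      moreover have "insert x K0 \<subseteq> U" using xC K0(2) C(2) by blast
      ultimately have "insert x K0 \<in> {K. compactin X K \<and> y \<in> F K \<and> K \<subseteq> U}" using cK1 by simp
      then have "insert x K0 \<subseteq> \<Union>\<W>" using cov by blast
      then show "x \<in> \<Union>\<W>" by blast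
    qed
    show ?thesis
    proof (cases "\<W> = {}")
      case True
      then have "C = {}" using CW by simp
      then have "P {} V" unfolding P_def using C by blast
      then have "y \<in> s (\<Union>{})" using memS[of y "{}"] V by auto
      then show ?thesis by (intro exI[of _ "{}"]) simp
    next
      case False
      have PC: "\<And>L. compactin Y L \<Longrightarrow> L \<subseteq> V \<Longrightarrow> \<exists>K. compactin X K \<and> K \<subseteq> C \<and> L \<subseteq> F K"
        using PPD[OF C(3)] by blast
      have "\<exists>\<E> T C'. finite \<E> \<and> \<E> \<subseteq> \<W> \<and> openin Y T \<and> y \<in> T \<and> closedin X C' \<and> C' \<subseteq> \<Union>\<E> \<and>
           (\<forall>L. compactin Y L \<and> L \<subseteq> T \<longrightarrow> (\<exists>K. compactin X K \<and> K \<subseteq> C' \<and> L \<subseteq> F K))"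
        by (rule main_contra[OF regX regY LX mu q V(1) V(3) C(1) CW oW False PC])
      then obtain \<E> T C' where E: "finite \<E>" "\<E> \<subseteq> \<W>" "openin Y T" "y \<in> T" "closedin X C'" "C' \<subseteq> \<Union>\<E>"
        and PE: "\<forall>L. compactin Y L \<and> L \<subseteq> T \<longrightarrow> (\<exists>K. compactin X K \<and> K \<subseteq> C' \<and> L \<subseteq> F K)"
        by (elim exE conjE)
      have "PP C' T" unfolding PP_def by (rule PE)
      then have "P (\<Union>\<E>) T" unfolding P_def using E(5,6) by blast
      then have "y \<in> s (\<Union>\<E>)" using memS[of y "\<Union>\<E>"] E(3,4) by blast
      then show ?thesis using E(1,2) by blast
    qed
  qed
  show ?thesis unfolding set_tri_quotient_def
  proof (rule exI[of _ s], intro conjI)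
    show "\<forall>U. openin X U \<longrightarrow> openin Y (s U)" using S1 by simp
    show "\<forall>U. openin X U \<longrightarrow> s U \<subseteq> \<Union>{F K | K. compactin X K \<and> K \<subseteq> U}" using S2 by simp
    show "s (topspace X) = topspace Y" by (rule S3)
    show "\<forall>U V. openin X U \<and> openin X V \<and> U \<subseteq> V \<longrightarrow> s U \<subseteq> s V" using S4 by simp
    show "\<forall>U y \<W>. openin X U \<and> y \<in> s U \<and> (\<forall>W\<in>\<W>. openin X W) \<and>
         \<Union>{K. compactin X K \<and> y \<in> F K \<and> K \<subseteq> U} \<subseteq> \<Union>\<W> \<longrightarrow>
         (\<exists>\<E>. finite \<E> \<and> \<E> \<subseteq> \<W> \<and> y \<in> s (\<Union>\<E>))"
    proof (intro allI impI)
      fix U y \<W>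
      assume h: "openin X U \<and> y \<in> s U \<and> (\<forall>W\<in>\<W>. openin X W) \<and>
         \<Union>{K. compactin X K \<and> y \<in> F K \<and> K \<subseteq> U} \<subseteq> \<Union>\<W>"
      show "\<exists>\<E>. finite \<E> \<and> \<E> \<subseteq> \<W> \<and> y \<in> s (\<Union>\<E>)"
        using h by (elim conjE) (rule S5)
    qed
  qed
qed

theorem proposition2p2:
  fixes X :: "'a topology" and Y :: "'b topology" and F :: "'a set \<Rightarrow> 'b set"
  assumes "tychonoff_space X" and "tychonoff_space Y"
    and "maps_compacts X Y F"
  shows "(monotone_K X F \<and> cond2 X Y F \<and> Lindelof_space X \<and> mu_complete Y \<and> q_space Y
            \<longrightarrow> monotone_K X F \<and> set_tri_quotient X Y F)
       \<and> (separable_space X \<and> metrizable_space X \<and> first_countable Y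
            \<longrightarrow> cond3c X Y F \<and>
                (monotone_K X F \<and> cond2c X Y F \<longrightarrow> monotone_K X F \<and> set_tri_quotient X Y F))"
proof (intro conjI impI)
  assume h: "monotone_K X F \<and> cond2 X Y F \<and> Lindelof_space X \<and> mu_complete Y \<and> q_space Y"
  then show "monotone_K X F" by simp
  show "set_tri_quotient X Y F" using h by (elim conjE) (rule tri_quotient_a[OF assms(1,2)])
next
  assume h: "separable_space X \<and> metrizable_space X \<and> first_countable Y"
  then have sc: "second_countable X" using sep_metr_second_countable by blast
  have fc: "first_countable Y" using h by simp
  show c3: "cond3c X Y F" by (rule cond3c_lemma[OF sc fc])
  {
    assume h2: "monotone_K X F \<and> cond2c X Y F"
    then show "monotone_K X F" by simp
    show "set_tri_quotient X Y F" using h2 by (elim conjE) (rule tri_quotient_b[OF c3])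
  }
qed

end
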